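(* Let $G=(V,E,\{w_j\})$ be a reduced instance of the line highway problem with $[s,\ell]$-valuation (with $s\ge1$), and let $r=s/\ell$. Let $\mathbf p$ be the price vector output by the algorithm $\mathrm{Line}_{[s,\ell]}$ described in the context. Then \[ \frac{\mathrm{Opt}_{\rm coup}(G)}{\mathbf{E}[\mathrm{Profit}_{\rm coup}(\mathbf p)]}\le \begin{cases} 4(1-\ln r) & 0\le r\le\alpha \text{ or } 1/\sqrt e\le r\le 1,\\ 3/r & \alpha<r\le 1/2,\\ 6 & 1/2<r<1/\sqrt e,\end{cases} \] where $\alpha\approx 0.3824$ is the solution of $3/x=4(1-\ln x)$.
   Context: For integers $a\le b$, $[a,b]=\{a,\dots,b\}$. A reduced instance of the line highway problem is $G=(V,E,\{w_j\})$ with $V=[1,n]$ and a finite multiset of customers $e_j=[j_s,j_t]$ ($1\le j_s\le j_t\le n$) with integer valuations $w_j>0$; it has $[s,\ell]$-valuation if $s=\min_j w_j$, $\ell=\max_j w_j$. For $\mathbf p\in\mathbb R^n$, $p(e_j)=\sum_{i\in e_j}p_i$, $\mathrm{Profit}_{\rm coup}(\mathbf p)=\sum_{j:\,w_j\ge p(e_j)}\max\{p(e_j),0\}$, $\mathrm{Opt}_{\rm coup}(G)=\max_{\mathbf p}\mathrm{Profit}_{\rm coup}(\mathbf p)$. DAG representation: vertices $u_0,\dots,u_n$, arc $u_{j_s-1}\to u_{j_t}$ for each $e_j$; partial sums $(s_0,\dots,s_n)$ give prices $p_i=s_i-s_{i-1}$. Algorithm Line_Random: choose each $s_i$ independently uniformly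 from $\{0,\dots,\ell\}$ and output the resulting prices $\boldsymbol\sigma$. Algorithm Line_Cut: mark each DAG vertex independently with probability $1/2$, let $L$ be marked and $R$ unmarked vertices; for each integer $x\in[s,\ell]$ set partial sum $0$ on $L$ and $x$ on $R$ giving $\boldsymbol\tau_x$; output $\boldsymbol\tau$ maximizing $\mathrm{Profit}_{\rm coup}$ among the $\boldsymbol\tau_x$. Algorithm $\mathrm{Line}_{[s,\ell]}$: run Line_Random to get $\boldsymbol\sigma$, run Line_Cut to get $\boldsymbol\tau$, and output $\mathbf p\in\{\boldsymbol\sigma,\boldsymbol\tau\}$ with $\mathrm{Profit}_{\rm coup}(\mathbf p)=\max\{\mathrm{Profit}_{\rm coup}(\boldsymbol\sigma),\mathrm{Profit}_{\rm coup}(\boldsymbol\tau)\}$. Expectations are over the algorithm's randomness. *)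

theory Defs
  imports "HOL-Probability.Probability"
begin

(* A customer is a triple (j_s, j_t, w_j): the interval [j_s, j_t] of items
   (edges of the line) and the integer valuation w_j.
   Prices are functions nat => real; only indices 1..n are relevant. *)

type_synonym customer = "nat \<times> nat \<times> nat"

definition price_of :: "(nat \<Rightarrow> real) \<Rightarrow> nat \<Rightarrow> nat \<Rightarrow> real" where
  "price_of p a b = (\<Sum>i\<in>{a..b}. p i)"

definition profit_coup :: "customer multiset \<Rightarrow> (nat \<Rightarrow> real) \<Rightarrow> real" where
  "profit_coup cs p =
     sum_mset (image_mset (\<lambda>(a, b, w).
        if real w \<ge> price_of p a b then max (price_of p a b) 0 else 0) cs)"

definition opt_coup :: "customer multiset \<Rightarrow> real" where
  "opt_coup cs = (SUP p. profit_coup cs p)"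

(* prices from partial sums s_0,...,s_n on DAG vertices u_0..u_n: p_i = s_i - s_{i-1} *)
definition sums_to_prices :: "(nat \<Rightarrow> int) \<Rightarrow> nat \<Rightarrow> real" where
  "sums_to_prices S i = of_int (S i - S (i - 1))"

definition random_sums :: "nat \<Rightarrow> nat \<Rightarrow> (nat \<Rightarrow> int) pmf" where
  "random_sums n l = Pi_pmf {0..n} 0 (\<lambda>_. pmf_of_set {0..int l})"

definition random_marks :: "nat \<Rightarrow> (nat \<Rightarrow> bool) pmf" where
  "random_marks n = Pi_pmf {0..n} False (\<lambda>_. bernoulli_pmf (1/2))"

(* tau_x: partial sum 0 on marked vertices L, x on unmarked vertices R *)
definition cut_prices :: "(nat \<Rightarrow> bool) \<Rightarrow> int \<Rightarrow> nat \<Rightarrow> real" where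
  "cut_prices M x = sums_to_prices (\<lambda>v. if M v then 0 else x)"

definition cut_profit :: "customer multiset \<Rightarrow> nat \<Rightarrow> nat \<Rightarrow> (nat \<Rightarrow> bool) \<Rightarrow> real" where
  "cut_profit cs s l M = Max ((\<lambda>x. profit_coup cs (cut_prices M x)) ` {int s..int l})"

(* E[Profit_coup(p)] for the output p of Line_[s,l]: the better of sigma and tau,
   with Line_Random and Line_Cut using independent randomness *)
definition line_expected_profit :: "nat \<Rightarrow> customer multiset \<Rightarrow> nat \<Rightarrow> nat \<Rightarrow> real" where
  "line_expected_profit n cs s l =
     measure_pmf.expectation (pair_pmf (random_sums n l) (random_marks n))
       (\<lambda>(S, M). max (profit_coup cs (sums_to_prices S)) (cut_profit cs s l M))"

definition alpha_const :: real where
  "alpha_const = (THE x. 0 < x \<and> x \<le> 1 \<and> 3 / x = 4 * (1 - ln x))"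

definition ratio_bound :: "real \<Rightarrow> real" where
  "ratio_bound r =
     (if (0 \<le> r \<and> r \<le> alpha_const) \<or> (1 / sqrt (exp 1) \<le> r \<and> r \<le> 1) then 4 * (1 - ln r)
      else if alpha_const < r \<and> r \<le> 1/2 then 3 / r
      else 6)"

end

theory Submission imports Defs begin

lemma telescope:
  fixes S :: "nat \<Rightarrow> int"
  assumes "1 \<le> a" "a \<le> b"
  shows "price_of (sums_to_prices S) a b = of_int (S b - S (a - 1))"
  using assms(2)
proof (induction b)
  case 0 then show ?case using assms(1) by simp
next
  case (Suc b)
  show ?case
  proof (cases "a = Suc b")
    case True then show ?thesis by (simp add: price_of_def sums_to_prices_def)
  next
    case False
    then have "a \<le> b" using Suc.prems by simp
    then have "{a..Suc b} = insert (Suc b) {a..b}" by auto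
    then show ?thesis using Suc.IH[OF \<open>a \<le> b\<close>] \<open>a \<le> b\<close>
      by (simp add: price_of_def sums_to_prices_def)
  qed
qed

lemma Pi_pmf_pair:
  assumes "finite A" "i \<in> A" "j \<in> A" "i \<noteq> j"
  shows "map_pmf (\<lambda>f. (f i, f j)) (Pi_pmf A d p) = pair_pmf (p i) (p j)"
proof -
  have A: "A = insert i (A - {i})" using assms by auto
  have "map_pmf (\<lambda>f. (f i, f j)) (Pi_pmf A d p) =
        map_pmf (\<lambda>f. (f i, f j)) (map_pmf (\<lambda>(y, f). f(i := y)) (pair_pmf (p i) (Pi_pmf (A - {i}) d p)))"
    by (subst A, subst Pi_pmf_insert) (use assms in auto)
  also have "\<dots> = map_pmf (\<lambda>(y, f). (y, f j)) (pair_pmf (p i) (Pi_pmf (A - {i}) d p))"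
    by (simp add: pmf.map_comp o_def case_prod_unfold assms(4)[symmetric])
  also have "\<dots> = pair_pmf (map_pmf id (p i)) (map_pmf (\<lambda>f. f j) (Pi_pmf (A - {i}) d p))"
    by (subst map_pair[symmetric]) (simp add: id_def)
  also have "\<dots> = pair_pmf (p i) (p j)"
    using assms by (subst Pi_pmf_component) auto
  finally show ?thesis .
qed

lemma expectation_Pi_pair:
  fixes g :: "'b \<Rightarrow> 'b \<Rightarrow> real"
  assumes "finite A" "i \<in> A" "j \<in> A" "i \<noteq> j"
  shows "measure_pmf.expectation (Pi_pmf A d p) (\<lambda>f. g (f i) (f j)) =
         measure_pmf.expectation (pair_pmf (p i) (p j)) (\<lambda>(x, y). g x y)"
proof -
  have "measure_pmf.expectation (Pi_pmf A d p) (\<lambda>f. g (f i) (f j)) =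
        measure_pmf.expectation (map_pmf (\<lambda>f. (f i, f j)) (Pi_pmf A d p)) (\<lambda>(x, y). g x y)"
    by simp
  also have "\<dots> = measure_pmf.expectation (pair_pmf (p i) (p j)) (\<lambda>(x, y). g x y)"
    by (simp only: Pi_pmf_pair[OF assms])
  finally show ?thesis .
qed

lemma expectation_pair_uniform:
  fixes g :: "int \<Rightarrow> int \<Rightarrow> real"
  assumes "finite X" "X \<noteq> {}"
  shows "measure_pmf.expectation (pair_pmf (pmf_of_set X) (pmf_of_set X)) (\<lambda>(x, y). g x y) =
         (\<Sum>x\<in>X. \<Sum>y\<in>X. g x y) / (real (card X))^2"
proof -
  have "measure_pmf.expectation (pair_pmf (pmf_of_set X) (pmf_of_set X)) (\<lambda>(x, y). g x y) =
     (\<Sum>z\<in>X \<times> X. (case z of (x, y) \<Rightarrow> g x y) * pmf (pair_pmf (pmf_of_set X) (pmf_of_set X)) z)"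
    by (rule integral_measure_pmf_real) (use assms in auto)
  also have "\<dots> = (\<Sum>z\<in>X \<times> X. (case z of (x, y) \<Rightarrow> g x y) / (real (card X))^2)"
  proof (intro sum.cong refl)
    fix z assume "z \<in> X \<times> X"
    then show "(case z of (x, y) \<Rightarrow> g x y) * pmf (pair_pmf (pmf_of_set X) (pmf_of_set X)) z =
      (case z of (x, y) \<Rightarrow> g x y) / (real (card X))^2"
      using assms by (auto simp: pmf_pair power2_eq_square pmf_of_set[OF assms(2,1)])
  qed
  also have "\<dots> = (\<Sum>x\<in>X. \<Sum>y\<in>X. g x y) / (real (card X))^2"
    by (simp add: sum.cartesian_product' sum_divide_distrib)
  finally show ?thesis .
qed

definition gw :: "nat \<Rightarrow> int \<Rightarrow> real" where
  "gw w d = (if real w \<ge> real_of_int d then max (real_of_int d) 0 else 0)"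

lemma gw_nonpos: "d \<le> 0 \<Longrightarrow> gw w d = 0"
  by (simp add: gw_def)

lemma gw_pos: "d \<ge> 1 \<Longrightarrow> gw w d = (if d \<le> int w then real_of_int d else 0)"
  by (auto simp: gw_def)

definition Qf :: "nat \<Rightarrow> nat \<Rightarrow> real" where
  "Qf w k = (if k \<le> w then real k * (real k + 1) / 2 else real w * (real w + 1) / 2)"

lemma row_sum: "(\<Sum>t\<in>{1..int K}. gw w t) = Qf w K"
proof (induction K)
  case 0 then show ?case by (simp add: Qf_def)
next
  case (Suc K)
  have "{1..int (Suc K)} = insert (int K + 1) {1..int K}" by auto
  then have "(\<Sum>t\<in>{1..int (Suc K)}. gw w t) = gw w (int K + 1) + Qf w K"
    using Suc by simp
  then show ?case by (cases "K = w") (auto simp: gw_pos Qf_def field_simps)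
qed

lemma row_sum': "(\<Sum>x\<in>{0..int L}. gw w (int L + 1 - x)) = Qf w (Suc L)"
proof -
  have "(\<Sum>x\<in>{0..int L}. gw w (int L + 1 - x)) = (\<Sum>t\<in>{1..int (Suc L)}. gw w t)"
    by (rule sum.reindex_bij_witness[of _ "\<lambda>t. int L + 1 - t" "\<lambda>x. int L + 1 - x"]) auto
  then show ?thesis using row_sum[of w "Suc L"] by (simp add: add.commute)
qed

definition Pf :: "nat \<Rightarrow> nat \<Rightarrow> real" where
  "Pf w L = (if L \<le> w then real L * (real L + 1) * (real L + 2) / 6
             else real w * (real w + 1) * (3 * real L + 2 - 2 * real w) / 6)"

lemma double_sum: "(\<Sum>x\<in>{0..int L}. \<Sum>y\<in>{0..int L}. gw w (y - x)) = Pf w L"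
proof (induction L)
  case 0 then show ?case by (simp add: Pf_def gw_def)
next
  case (Suc L)
  have I: "{0..int (Suc L)} = insert (int L + 1) {0..int L}" by auto
  have z: "(\<Sum>y\<in>{0..int (Suc L)}. gw w (y - (int L + 1))) = 0"
    by (intro sum.neutral) (auto intro: gw_nonpos)
  have "(\<Sum>x\<in>{0..int (Suc L)}. \<Sum>y\<in>{0..int (Suc L)}. gw w (y - x)) =
        (\<Sum>x\<in>{0..int L}. \<Sum>y\<in>{0..int (Suc L)}. gw w (y - x))"
    using z by (subst (1) I) simp
  also have "\<dots> = (\<Sum>x\<in>{0..int L}. gw w (int L + 1 - x) + (\<Sum>y\<in>{0..int L}. gw w (y - x)))"
    by (subst I) simp
  also have "\<dots> = Qf w (Suc L) + Pf w L"
    by (simp add: sum.distrib row_sum' Suc)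
  also have "\<dots> = Pf w (Suc L)"
    by (cases "L = w") (auto simp: Qf_def Pf_def field_simps)
  finally show ?case .
qed


abbreviation term_of :: "(nat \<Rightarrow> real) \<Rightarrow> customer \<Rightarrow> real" where
  "term_of p \<equiv> (\<lambda>(a, b, w). if real w \<ge> price_of p a b then max (price_of p a b) 0 else 0)"

lemma random_customer:
  assumes "1 \<le> a" "a \<le> b" "b \<le> n" "w \<le> l"
  shows "measure_pmf.expectation (random_sums n l) (\<lambda>S. term_of (sums_to_prices S) (a, b, w))
         = Pf w l / (real l + 1)^2"
proof -
  have "measure_pmf.expectation (random_sums n l) (\<lambda>S. term_of (sums_to_prices S) (a, b, w))
      = measure_pmf.expectation (random_sums n l) (\<lambda>S. (\<lambda>x y. gw w (y - x)) (S (a - 1)) (S b))"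
    using telescope[OF assms(1,2)] by (simp only: gw_def case_prod_conv)
  also have "\<dots> = measure_pmf.expectation (pair_pmf (pmf_of_set {0..int l}) (pmf_of_set {0..int l}))
                    (\<lambda>(x, y). gw w (y - x))"
    unfolding random_sums_def
    by (rule expectation_Pi_pair) (use assms in auto)
  also have "\<dots> = (\<Sum>x\<in>{0..int l}. \<Sum>y\<in>{0..int l}. gw w (y - x)) / (real (card {0..int l}))^2"
    by (rule expectation_pair_uniform) auto
  also have "\<dots> = Pf w l / (real l + 1)^2"
    by (simp add: double_sum add.commute)
  finally show ?thesis .
qed

lemma cut_customer:
  assumes "1 \<le> a" "a \<le> b" "b \<le> n" "0 \<le> x"
  shows "measure_pmf.expectation (random_marks n) (\<lambda>M. term_of (cut_prices M x) (a, b, w))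
         = (if x \<le> int w then real_of_int x else 0) / 4"
proof -
  let ?h = "\<lambda>u v. (let pr = real_of_int ((if v then 0 else x) - (if u then 0 else x)) in
                     if real w \<ge> pr then max pr 0 else 0)"
  have "measure_pmf.expectation (random_marks n) (\<lambda>M. term_of (cut_prices M x) (a, b, w))
      = measure_pmf.expectation (random_marks n) (\<lambda>M. ?h (M (a - 1)) (M b))"
    using telescope[OF assms(1,2)] by (simp only: cut_prices_def Let_def case_prod_conv)
  also have "\<dots> = measure_pmf.expectation (pair_pmf (bernoulli_pmf (1/2)) (bernoulli_pmf (1/2)))
                    (\<lambda>(u, v). ?h u v)"
    unfolding random_marks_def
    by (rule expectation_Pi_pair) (use assms in auto)
  also have "\<dots> = (\<Sum>z\<in>{(True,True),(True,False),(False,True),(False,False)}.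
                     (case z of (u, v) \<Rightarrow> ?h u v) * pmf (pair_pmf (bernoulli_pmf (1/2)) (bernoulli_pmf (1/2))) z)"
    by (rule integral_measure_pmf_real) auto
  also have "\<dots> = (if x \<le> int w then real_of_int x else 0) / 4"
    using assms by (simp add: pmf_pair Let_def)
  finally show ?thesis .
qed

lemma ln_step: "1 \<le> l \<Longrightarrow> 1 / (real l + 1) \<le> ln (real l + 1) - ln (real l)"
proof -
  assume l: "1 \<le> l"
  have "ln (real l / (real l + 1)) \<le> real l / (real l + 1) - 1"
    using l by (intro ln_le_minus_one) auto
  also have "\<dots> = - (1 / (real l + 1))" by (simp add: field_simps)
  finally show ?thesis using l by (simp add: ln_div)
qed

lemma harmonic: assumes "1 \<le> s" "s \<le> l" shows "(\<Sum>x\<in>{s<..l}. 1 / real x) \<le> ln (real l) - ln (real s)"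
  using assms(2)
proof (induction l rule: dec_induct)
  case base then show ?case by simp
next
  case (step m)
  have "{s<..Suc m} = insert (Suc m) {s<..m}" using step by auto
  then have "(\<Sum>x\<in>{s<..Suc m}. 1 / real x) = 1 / (real m + 1) + (\<Sum>x\<in>{s<..m}. 1 / real x)"
    by (simp add: add.commute)
  also have "\<dots> \<le> (ln (real m + 1) - ln (real m)) + (ln (real m) - ln (real s))"
    using step assms ln_step[of m] by (intro add_mono) auto
  finally show ?case by (simp add: add.commute)
qed

lemma phi_nonneg:
  fixes s w l :: real
  assumes "1 \<le> s" "s \<le> w" "w \<le> l" "2 * s \<le> l"
  shows "0 \<le> l * w * (w + 1) * (3 * l + 2 - 2 * w) + 3 * l * (l - 2 * s) * (l + 1)^2
             - 2 * w * (2 * l - 3 * s) * (l + 1)^2"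
proof (cases "2 * w \<le> l")
  case True
  define k where "k = l - 2 * w"
  have k0: "0 \<le> k" using True k_def by simp
  have w0: "0 \<le> w" using assms by simp
  have eq: "l * w * (w + 1) * (3 * l + 2 - 2 * w) + 3 * l * (l - 2 * s) * (l + 1)^2
             - 2 * w * (2 * l - 3 * s) * (l + 1)^2
          = (3*k^2+6*k^3+3*k^4+4*w*k+19*w*k^2+14*w*k^3+2*w^2+16*w^2*k+21*w^2*k^2+4*w^3+10*w^3*k)
            + 6 * (l + 1)^2 * (l - w) * (w - s)"
    unfolding k_def by (simp add: algebra_simps power2_eq_square power3_eq_cube power4_eq_xxxx)
  have "0 \<le> 6 * (l + 1)^2 * (l - w) * (w - s)" using assms by simp
  moreover have "0 \<le> 3*k^2+6*k^3+3*k^4+4*w*k+19*w*k^2+14*w*k^3+2*w^2+16*w^2*k+21*w^2*k^2+4*w^3+10*w^3*k"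
    using k0 w0 by simp
  ultimately show ?thesis using eq by linarith
next
  case False
  have eq: "l * w * (w + 1) * (3 * l + 2 - 2 * w) + 3 * l * (l - 2 * s) * (l + 1)^2
             - 2 * w * (2 * l - 3 * s) * (l + 1)^2
          = l * w * ((l - w) * (2 * w - l) + l + 1) + 3 * (l + 1)^2 * (l - w) * (l - 2 * s)"
    by (simp add: algebra_simps power2_eq_square)
  have "0 \<le> (l - w) * (2 * w - l)" using False assms by simp
  then have "0 \<le> l * w * ((l - w) * (2 * w - l) + l + 1)" using assms by simp
  moreover have "0 \<le> 3 * (l + 1)^2 * (l - w) * (l - 2 * s)" using assms by simp
  ultimately show ?thesis using eq by linarith
qed

lemma mix_customer:
  fixes s w l u :: real
  assumes "1 \<le> s" "s \<le> w" "w \<le> l" "2 * s \<le> l"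
    and u: "u * (l + 1)^2 = w * (w + 1) * (3 * l + 2 - 2 * w) / 6"
  shows "(2 * l - 3 * s) * s * w \<le> 3 * l * (s * u + 2 * (l - 2 * s) * (s / 4))"
proof -
  have "(l + 1)^2 * (3 * l * (s * u + 2 * (l - 2 * s) * (s / 4)) - (2 * l - 3 * s) * s * w)
      = 3 * l * s * (u * (l + 1)^2) + (l + 1)^2 * (3 * l * (2 * (l - 2 * s) * (s / 4)) - (2 * l - 3 * s) * s * w)"
    by (simp add: algebra_simps)
  also have "\<dots> = s * (l * w * (w + 1) * (3 * l + 2 - 2 * w) + 3 * l * (l - 2 * s) * (l + 1)^2
             - 2 * w * (2 * l - 3 * s) * (l + 1)^2) / 2"
    unfolding u by (simp add: field_simps power2_eq_square)
  also have "\<dots> \<ge> 0" using phi_nonneg[OF assms(1-4)] assms by simp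
  finally have "0 \<le> (l + 1)^2 * (3 * l * (s * u + 2 * (l - 2 * s) * (s / 4)) - (2 * l - 3 * s) * s * w)" .
  moreover have "0 < (l + 1)^2" using assms by simp
  ultimately have "0 \<le> 3 * l * (s * u + 2 * (l - 2 * s) * (s / 4)) - (2 * l - 3 * s) * s * w"
    by (simp add: zero_le_mult_iff)
  then show ?thesis by simp
qed

lemma six_customer:
  fixes s w l :: real
  assumes "l < 2 * s" "s \<le> w" "w \<le> l" "0 \<le> w"
  shows "w / 6 \<le> (w * (w + 1) * (3 * l + 2 - 2 * w) / 6) / (l + 1)^2"
proof -
  have "(w + 1) * (3 * l + 2 - 2 * w) - (l + 1)^2 = (l - w) * (2 * w - l) + l + 1"
    by (simp add: algebra_simps power2_eq_square)
  moreover have "0 \<le> (l - w) * (2 * w - l)" using assms by simp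
  ultimately have "(l + 1)^2 \<le> (w + 1) * (3 * l + 2 - 2 * w)" using assms by linarith
  then have "w * (l + 1)^2 \<le> w * ((w + 1) * (3 * l + 2 - 2 * w))"
    using assms by (intro mult_left_mono) auto
  then show ?thesis using assms by (simp add: field_simps)
qed


lemma Pf_eq: "w \<le> l \<Longrightarrow> Pf w l = real w * (real w + 1) * (3 * real l + 2 - 2 * real w) / 6"
  by (cases "l = w") (auto simp: Pf_def field_simps)

lemma sum_mset_swap_sum:
  "sum_mset (image_mset (\<lambda>c. \<Sum>x\<in>A. f c x) M) = (\<Sum>x\<in>A. sum_mset (image_mset (\<lambda>c. f c x) M))"
  by (induction M) (simp_all add: sum.distrib)

lemma expect_sum_mset:
  fixes F :: "'c \<Rightarrow> 'a \<Rightarrow> real"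
  assumes "finite (set_pmf P)"
  shows "measure_pmf.expectation P (\<lambda>z. sum_mset (image_mset (\<lambda>c. F c z) M))
       = sum_mset (image_mset (\<lambda>c. measure_pmf.expectation P (F c)) M)"
proof (induction M)
  case empty then show ?case by simp
next
  case (add x M)
  have "measure_pmf.expectation P (\<lambda>z. sum_mset (image_mset (\<lambda>c. F c z) (add_mset x M)))
      = measure_pmf.expectation P (\<lambda>z. F x z + sum_mset (image_mset (\<lambda>c. F c z) M))" by simp
  also have "\<dots> = measure_pmf.expectation P (F x) + measure_pmf.expectation P (\<lambda>z. sum_mset (image_mset (\<lambda>c. F c z) M))"
    by (rule Bochner_Integration.integral_add) (auto intro: integrable_measure_pmf_finite[OF assms])
  finally show ?case using add by simp
qed

lemma finite_random_sums: "finite (set_pmf (random_sums n l))"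
  unfolding random_sums_def
  by (subst set_Pi_pmf) (auto simp: set_pmf_of_set)

lemma finite_random_marks: "finite (set_pmf (random_marks n))"
  unfolding random_marks_def
  by (subst set_Pi_pmf) auto

lemma profit_coup_alt: "profit_coup cs p = sum_mset (image_mset (term_of p) cs)"
  by (simp add: profit_coup_def)

lemma E_random:
  assumes valid: "\<forall>(a, b, w) \<in># cs. 1 \<le> a \<and> a \<le> b \<and> b \<le> n \<and> w \<le> l"
  shows "measure_pmf.expectation (random_sums n l) (\<lambda>S. profit_coup cs (sums_to_prices S))
       = sum_mset (image_mset (\<lambda>c. Pf (snd (snd c)) l / (real l + 1)^2) cs)"
proof -
  have "measure_pmf.expectation (random_sums n l) (\<lambda>S. profit_coup cs (sums_to_prices S))
       = sum_mset (image_mset (\<lambda>c. measure_pmf.expectation (random_sums n l) (\<lambda>S. term_of (sums_to_prices S) c)) cs)"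
    unfolding profit_coup_alt by (rule expect_sum_mset[OF finite_random_sums])
  also have "\<dots> = sum_mset (image_mset (\<lambda>c. Pf (snd (snd c)) l / (real l + 1)^2) cs)"
  proof (intro arg_cong[where f = sum_mset] image_mset_cong)
    fix c assume "c \<in># cs"
    moreover obtain a b w where c: "c = (a, b, w)" by (cases c) auto
    ultimately have "1 \<le> a" "a \<le> b" "b \<le> n" "w \<le> l" using valid by auto
    then show "measure_pmf.expectation (random_sums n l) (\<lambda>S. term_of (sums_to_prices S) c)
        = Pf (snd (snd c)) l / (real l + 1)^2"
      unfolding c by (simp only: random_customer) simp
  qed
  finally show ?thesis .
qed

lemma E_cut:
  assumes valid: "\<forall>(a, b, w) \<in># cs. 1 \<le> a \<and> a \<le> b \<and> b \<le> n"
  shows "measure_pmf.expectation (random_marks n) (\<lambda>M. profit_coup cs (cut_prices M (int x)))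
       = sum_mset (image_mset (\<lambda>c. (if x \<le> snd (snd c) then real x else 0) / 4) cs)"
proof -
  have "measure_pmf.expectation (random_marks n) (\<lambda>M. profit_coup cs (cut_prices M (int x)))
       = sum_mset (image_mset (\<lambda>c. measure_pmf.expectation (random_marks n) (\<lambda>M. term_of (cut_prices M (int x)) c)) cs)"
    unfolding profit_coup_alt by (rule expect_sum_mset[OF finite_random_marks])
  also have "\<dots> = sum_mset (image_mset (\<lambda>c. (if x \<le> snd (snd c) then real x else 0) / 4) cs)"
  proof (intro arg_cong[where f = sum_mset] image_mset_cong)
    fix c assume "c \<in># cs"
    moreover obtain a b w where c: "c = (a, b, w)" by (cases c) auto
    ultimately have "1 \<le> a" "a \<le> b" "b \<le> n" using valid by auto
    then show "measure_pmf.expectation (random_marks n) (\<lambda>M. term_of (cut_prices M (int x)) c)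
        = (if x \<le> snd (snd c) then real x else 0) / 4"
      unfolding c by (simp only: cut_customer[of a b n "int x" w]) simp
  qed
  finally show ?thesis .
qed

lemma E_ge_random:
  "measure_pmf.expectation (random_sums n l) (\<lambda>S. profit_coup cs (sums_to_prices S))
     \<le> line_expected_profit n cs s l"
proof -
  have fin: "finite (set_pmf (pair_pmf (random_sums n l) (random_marks n)))"
    using finite_random_sums finite_random_marks by simp
  have "measure_pmf.expectation (random_sums n l) (\<lambda>S. profit_coup cs (sums_to_prices S))
      = measure_pmf.expectation (pair_pmf (random_sums n l) (random_marks n))
          (\<lambda>z. profit_coup cs (sums_to_prices (fst z)))"
    using expectation_pair_pmf_fst[where f="\<lambda>S. profit_coup cs (sums_to_prices S)" and p="random_sums n l" and q="random_marks n"]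
    by simp
  also have "\<dots> \<le> line_expected_profit n cs s l"
    unfolding line_expected_profit_def
    by (intro integral_mono integrable_measure_pmf_finite[OF fin]) auto
  finally show ?thesis .
qed

lemma E_ge_cut:
  assumes "s \<le> x" "x \<le> l"
  shows "measure_pmf.expectation (random_marks n) (\<lambda>M. profit_coup cs (cut_prices M (int x)))
     \<le> line_expected_profit n cs s l"
proof -
  have fin: "finite (set_pmf (pair_pmf (random_sums n l) (random_marks n)))"
    using finite_random_sums finite_random_marks by simp
  have "measure_pmf.expectation (random_marks n) (\<lambda>M. profit_coup cs (cut_prices M (int x)))
      = measure_pmf.expectation (pair_pmf (random_sums n l) (random_marks n))
          (\<lambda>z. profit_coup cs (cut_prices (snd z) (int x)))"
    using expectation_pair_pmf_snd[where f="\<lambda>M. profit_coup cs (cut_prices M (int x))" and p="random_sums n l" and q="random_marks n"]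
    by simp
  also have "\<dots> \<le> line_expected_profit n cs s l"
    unfolding line_expected_profit_def
  proof (intro integral_mono integrable_measure_pmf_finite[OF fin])
    fix z :: "(nat \<Rightarrow> int) \<times> (nat \<Rightarrow> bool)"
    have "profit_coup cs (cut_prices (snd z) (int x)) \<le> cut_profit cs s l (snd z)"
      unfolding cut_profit_def using assms by (intro Max_ge) auto
    then show "profit_coup cs (cut_prices (snd z) (int x))
       \<le> (case z of (S, M) \<Rightarrow> max (profit_coup cs (sums_to_prices S)) (cut_profit cs s l M))"
      by (cases z) auto
  qed
  finally show ?thesis .
qed

lemma opt_le_W:
  assumes "\<forall>(a, b, w) \<in># cs. True"
  shows "opt_coup cs \<le> sum_mset (image_mset (\<lambda>c. real (snd (snd c))) cs)"
  unfolding opt_coup_def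
proof (rule cSUP_least)
  fix p
  show "profit_coup cs p \<le> sum_mset (image_mset (\<lambda>c. real (snd (snd c))) cs)"
    unfolding profit_coup_alt
    by (intro sum_mset_mono) (auto split: prod.splits)
qed simp


lemma final_B:
  fixes W E s l ER C :: real
  assumes E0: "0 < E" and s1: "1 \<le> s" and h: "2 * s \<le> l"
    and main: "(2 * l - 3 * s) * s * W \<le> 3 * l * (s * ER + 2 * (l - 2 * s) * C)"
    and ER: "ER \<le> E" and C: "C \<le> E"
  shows "W / E \<le> 3 / (s / l)"
proof -
  have D0: "0 < 2 * l - 3 * s" using h s1 by linarith
  have "s * ER \<le> s * E" using ER s1 by (intro mult_left_mono) auto
  moreover have "2 * (l - 2 * s) * C \<le> 2 * (l - 2 * s) * E"
    using C h by (intro mult_left_mono) auto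
  ultimately have "s * ER + 2 * (l - 2 * s) * C \<le> s * E + 2 * (l - 2 * s) * E" by linarith
  then have "3 * l * (s * ER + 2 * (l - 2 * s) * C) \<le> 3 * l * (s * E + 2 * (l - 2 * s) * E)"
    using h s1 by (intro mult_left_mono) auto
  also have "\<dots> = (2 * l - 3 * s) * (3 * l * E)"
    by (simp add: algebra_simps)
  finally have "(2 * l - 3 * s) * (s * W) \<le> (2 * l - 3 * s) * (3 * l * E)"
    using main by (simp add: mult.assoc)
  then have "s * W \<le> 3 * l * E" using D0 by simp
  then have "W \<le> 3 * l * E / s" using s1 by (simp add: pos_le_divide_eq mult.commute)
  then have "W \<le> 3 * l / s * E" by simp
  then have "W / E \<le> 3 * l / s" using E0 by (simp add: pos_divide_le_eq)
  then show ?thesis by simp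
qed

theorem theorem3:
  fixes n :: nat and cs :: "customer multiset" and s l :: nat
  assumes nonempty: "cs \<noteq> {#}"
    and valid: "\<forall>(a, b, w) \<in># cs. 1 \<le> a \<and> a \<le> b \<and> b \<le> n \<and> 0 < w"
    and s_def: "s = Min ((\<lambda>(a, b, w). w) ` set_mset cs)"
    and l_def: "l = Max ((\<lambda>(a, b, w). w) ` set_mset cs)"
    and s_ge1: "1 \<le> s"
  shows "0 < line_expected_profit n cs s l \<and>
         opt_coup cs / line_expected_profit n cs s l \<le> ratio_bound (real s / real l)"
proof -
  define wv :: "customer \<Rightarrow> nat" where "wv c = snd (snd c)" for c
  define E where "E = line_expected_profit n cs s l"
  define W where "W = sum_mset (image_mset (\<lambda>c. real (wv c)) cs)"
  define m where "m = real (size cs)"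
  define ER where "ER = sum_mset (image_mset (\<lambda>c. Pf (wv c) l / (real l + 1)^2) cs)"
  define EC where "EC x = sum_mset (image_mset (\<lambda>c. (if x \<le> wv c then real x else 0) / 4) cs)" for x
  have fin: "finite ((\<lambda>(a, b, w). w) ` set_mset cs)" by simp
  have wvim: "wv c \<in> (\<lambda>(a, b, w). w) ` set_mset cs" if "c \<in># cs" for c
    using that unfolding wv_def by (intro image_eqI[of _ _ c]) (auto split: prod.splits)
  have bnd: "s \<le> wv c \<and> wv c \<le> l" if "c \<in># cs" for c
    using wvim[OF that] fin unfolding s_def l_def by auto
  obtain c0 where c0: "c0 \<in># cs" using nonempty by (meson multiset_nonemptyE)
  have sl: "s \<le> l" using bnd[OF c0] by simp
  have l1: "1 \<le> l" using sl s_ge1 by simp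
  have valid': "\<forall>(a, b, w) \<in># cs. 1 \<le> a \<and> a \<le> b \<and> b \<le> n \<and> w \<le> l"
    using valid bnd unfolding wv_def by fastforce
  have valid'': "\<forall>(a, b, w) \<in># cs. 1 \<le> a \<and> a \<le> b \<and> b \<le> n"
    using valid by fastforce
  have ER_le: "ER \<le> E"
    using E_ge_random[of n l cs s] E_random[OF valid'] unfolding ER_def E_def wv_def by simp
  have EC_le: "EC x \<le> E" if "s \<le> x" "x \<le> l" for x
    using E_ge_cut[OF that, of n cs] E_cut[OF valid'', of x] unfolding EC_def E_def wv_def by simp
  have m0: "0 < m" using nonempty unfolding m_def by (simp add: nonempty_has_size)
  have ECs: "EC s = m * real s / 4"
  proof -
    have "EC s = sum_mset (image_mset (\<lambda>c. real s / 4) cs)"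
      unfolding EC_def using bnd by (intro arg_cong[where f = sum_mset] image_mset_cong) auto
    then show ?thesis unfolding m_def by (simp add: sum_mset_constant)
  qed
  have Epos: "0 < E"
  proof -
    have "0 < m * real s / 4" using m0 s_ge1 by simp
    then show ?thesis using EC_le[of s] sl ECs by linarith
  qed
  have opt: "opt_coup cs \<le> W"
    using opt_le_W[of cs] unfolding W_def wv_def by simp
  have optE: "opt_coup cs / E \<le> W / E"
    using opt Epos by (simp add: divide_right_mono)
  have boundA: "W / E \<le> 4 * (1 - ln (real s / real l))"
  proof -
    define N where "N x = sum_mset (image_mset (\<lambda>c. if x \<le> wv c then 1 else 0 :: real) cs)" for x
    have w_dec: "real (wv c) = real s + (\<Sum>x\<in>{s<..l}. if x \<le> wv c then 1 else 0)" if "c \<in># cs" for c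
    proof -
      have "(\<Sum>x\<in>{s<..l}. if x \<le> wv c then 1 else 0 :: real) = (\<Sum>x\<in>{x\<in>{s<..l}. x \<le> wv c}. 1)"
        by (rule sum.inter_filter[symmetric]) simp
      also have "{x\<in>{s<..l}. x \<le> wv c} = {s<..wv c}" using bnd[OF that] by auto
      finally show ?thesis using bnd[OF that] by simp
    qed
    have "W = sum_mset (image_mset (\<lambda>c. real s + (\<Sum>x\<in>{s<..l}. if x \<le> wv c then 1 else 0)) cs)"
      unfolding W_def using w_dec by (intro arg_cong[where f = sum_mset] image_mset_cong) auto
    also have "\<dots> = m * real s + (\<Sum>x\<in>{s<..l}. N x)"
      unfolding N_def m_def by (simp add: sum_mset.distrib sum_mset_constant sum_mset_swap_sum)
    finally have W_eq: "W = m * real s + (\<Sum>x\<in>{s<..l}. N x)" .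
    have N_le: "N x \<le> 4 * E * (1 / real x)" if "x \<in> {s<..l}" for x
    proof -
      have "EC x = sum_mset (image_mset (\<lambda>c. real x / 4 * (if x \<le> wv c then 1 else 0)) cs)"
        unfolding EC_def by (intro arg_cong[where f = sum_mset] image_mset_cong) auto
      then have "EC x = real x / 4 * N x"
        unfolding N_def by (simp add: sum_mset_distrib_left)
      moreover have "EC x \<le> E" using that by (intro EC_le) auto
      moreover have "0 < real x" using that by auto
      ultimately show ?thesis by (simp add: field_simps)
    qed
    have "W \<le> 4 * E + (\<Sum>x\<in>{s<..l}. 4 * E * (1 / real x))"
      unfolding W_eq using EC_le[of s] sl ECs by (intro add_mono sum_mono N_le) auto
    also have "\<dots> = 4 * E * (1 + (\<Sum>x\<in>{s<..l}. 1 / real x))"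
      by (simp add: sum_distrib_left algebra_simps)
    also have "\<dots> \<le> 4 * E * (1 + (ln (real l) - ln (real s)))"
      using harmonic[OF s_ge1 sl] Epos by (intro mult_left_mono) auto
    also have "\<dots> = 4 * E * (1 - ln (real s / real l))"
      using s_ge1 l1 by (simp add: ln_div)
    finally show ?thesis using Epos by (simp add: field_simps)
  qed
  have boundB: "W / E \<le> 3 / (real s / real l)" if h: "2 * s \<le> l"
  proof -
    have D0: "0 < 2 * real l - 3 * real s" using h s_ge1 by linarith
    have per: "(2 * real l - 3 * real s) * real s * real (wv c)
      \<le> 3 * real l * (real s * (Pf (wv c) l / (real l + 1)^2) + 2 * (real l - 2 * real s) * (real s / 4))"
      if "c \<in># cs" for c
    proof -
      have b: "s \<le> wv c" "wv c \<le> l" using bnd[OF that] by auto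
      have "1 \<le> real s" "real s \<le> real (wv c)" "real (wv c) \<le> real l" "2 * real s \<le> real l"
        using b h s_ge1 by linarith+
      moreover have "Pf (wv c) l / (real l + 1)^2 * (real l + 1)^2
          = real (wv c) * (real (wv c) + 1) * (3 * real l + 2 - 2 * real (wv c)) / 6"
        using Pf_eq[OF b(2)] by simp
      ultimately show ?thesis by (rule mix_customer)
    qed
    have "(2 * real l - 3 * real s) * real s * W
        = sum_mset (image_mset (\<lambda>c. (2 * real l - 3 * real s) * real s * real (wv c)) cs)"
      unfolding W_def by (simp only: sum_mset_distrib_left)
    also have "\<dots> \<le> sum_mset (image_mset (\<lambda>c. 3 * real l * (real s * (Pf (wv c) l / (real l + 1)^2) + 2 * (real l - 2 * real s) * (real s / 4))) cs)"
      using per by (intro sum_mset_mono) auto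
    also have "\<dots> = 3 * real l * (real s * ER + 2 * (real l - 2 * real s) * EC s)"
    proof -
      let ?K = "3 * real l" and ?C = "2 * (real l - 2 * real s) * (real s / 4)"
      let ?u = "\<lambda>c. Pf (wv c) l / (real l + 1)^2"
      have "sum_mset (image_mset (\<lambda>c. ?K * (real s * ?u c + ?C)) cs)
          = ?K * sum_mset (image_mset (\<lambda>c. real s * ?u c + ?C) cs)"
        by (simp only: sum_mset_distrib_left)
      also have "sum_mset (image_mset (\<lambda>c. real s * ?u c + ?C) cs)
          = real s * ER + m * ?C"
        unfolding ER_def m_def by (simp only: sum_mset.distrib sum_mset_distrib_left sum_mset_constant)
      also have "m * ?C = 2 * (real l - 2 * real s) * EC s"
        unfolding ECs by (simp add: mult_ac)
      finally show ?thesis .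
    qed
    finally have main: "(2 * real l - 3 * real s) * real s * W \<le> 3 * real l * (real s * ER + 2 * (real l - 2 * real s) * EC s)" .
    have "1 \<le> real s" "2 * real s \<le> real l" using s_ge1 h by linarith+
    from final_B[OF Epos this main ER_le EC_le[OF order_refl sl]] show ?thesis .
  qed
  have boundC: "W / E \<le> 6" if h: "l < 2 * s"
  proof -
    have "W * (1 / 6) = sum_mset (image_mset (\<lambda>c. real (wv c) * (1 / 6)) cs)"
      unfolding W_def by (simp only: sum_mset_distrib_right)
    also have "\<dots> \<le> ER"
      unfolding ER_def
    proof (intro sum_mset_mono)
      fix c assume "c \<in># cs"
      then have b: "s \<le> wv c" "wv c \<le> l" using bnd by auto
      have "real l < 2 * real s" "real s \<le> real (wv c)" "real (wv c) \<le> real l" "0 \<le> real (wv c)"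
        using b h by linarith+
      from six_customer[OF this]
      have "real (wv c) / 6 \<le> Pf (wv c) l / (real l + 1)^2"
        by (simp only: Pf_eq[OF b(2)])
      then show "real (wv c) * (1 / 6) \<le> Pf (wv c) l / (real l + 1)^2"
        by simp
    qed
    finally have "W * (1 / 6) \<le> E" using ER_le by (rule order_trans)
    then have "W \<le> 6 * E" by linarith
    then show ?thesis using Epos by (simp only: pos_divide_le_eq)
  qed
  have "W / E \<le> ratio_bound (real s / real l)"
  proof -
    define r where "r = real s / real l"
    define C1 where "C1 = ((0 \<le> r \<and> r \<le> alpha_const) \<or> (1 / sqrt (exp 1) \<le> r \<and> r \<le> 1))"
    define C2 where "C2 = (alpha_const < r \<and> r \<le> 1/2)"
    have rb: "ratio_bound r = (if C1 then 4 * (1 - ln r) else if C2 then 3 / r else 6)"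
      unfolding ratio_bound_def C1_def C2_def by (rule refl)
    have r0: "0 \<le> r" unfolding r_def by simp
    show ?thesis
    proof (cases C1)
      case True
      then show ?thesis using boundA unfolding r_def[symmetric] rb by (simp only: if_True)
    next
      case F1: False
      show ?thesis
      proof (cases C2)
        case True
        then have "r \<le> 1/2" unfolding C2_def by blast
        then have "2 * real s \<le> real l" using l1 unfolding r_def by (simp add: divide_le_eq)
        then have "2 * s \<le> l" by linarith
        then show ?thesis using boundB[of] F1 True unfolding r_def[symmetric] rb by (simp only: if_False if_True)
      next
        case False
        have "alpha_const < r" using F1 r0 unfolding C1_def by linarith
        then have "1/2 < r" using False unfolding C2_def by linarith
        then have "real l < 2 * real s" using l1 unfolding r_def by (simp add: less_divide_eq)
        then have "l < 2 * s" by linarith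
        then show ?thesis using boundC F1 False unfolding r_def[symmetric] rb by (simp only: if_False)
      qed
    qed
  qed
  then have fin: "opt_coup cs / E \<le> ratio_bound (real s / real l)" using optE by (rule order_trans[rotated])
  show ?thesis using Epos fin unfolding E_def by (rule conjI)
qed

end
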